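(* Let $T\in\mathcal{T}_\pi$ and let $u_1v_1,u_2v_2\in E(T)$ be edges such that the path $P_{v_1v_2}$ contains neither $u_1$ nor $u_2$. Let $T'$ be obtained from $T$ by replacing the edges $u_1v_1$ and $u_2v_2$ by the edges $u_1v_2$ and $u_2v_1$. Then $T'$ is a tree and $T'\in\mathcal{T}_\pi$. Furthermore, for every eigenvector $f$ of $L(T)$ corresponding to $\lambda(T)$: if $|f(u_1)|\ge|f(u_2)|$ and $|f(v_2)|\ge|f(v_1)|$, then $\lambda(T')\ge\lambda(T)$, and the inequality is strict if at least one of $|f(u_1)|\ge|f(u_2)|$, $|f(v_2)|\ge|f(v_1)|$ is strict.
   Context: For a graph $G=(V,E)$ the Laplacian is $L(G)=D(G)-A(G)$ ($D$ the diagonal degree matrix, $A$ the adjacency matrix), and $\lambda(G)$ denotes its largest eigenvalue. $\mathcal{T}_\pi$ is the set of all trees with degree sequence $\pi$. $P_{uv}$ denotes the (unique) path in the tree between vertices $u$ and $v$. *)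

theory Defs
  imports Complex_Main "HOL-Library.Multiset"
begin

definition simple_graph :: "'a set \<Rightarrow> 'a set set \<Rightarrow> bool" where
  "simple_graph V E \<longleftrightarrow> finite V \<and>
     (\<forall>e\<in>E. \<exists>u v. e = {u, v} \<and> u \<noteq> v \<and> u \<in> V \<and> v \<in> V)"

fun is_walk :: "'a set set \<Rightarrow> 'a list \<Rightarrow> bool" where
  "is_walk E [] = False"
| "is_walk E [v] = True"
| "is_walk E (u # v # vs) = ({u, v} \<in> E \<and> is_walk E (v # vs))"

definition is_path :: "'a set set \<Rightarrow> 'a list \<Rightarrow> bool" where
  "is_path E p \<longleftrightarrow> is_walk E p \<and> distinct p"

definition connected_graph :: "'a set \<Rightarrow> 'a set set \<Rightarrow> bool" where
  "connected_graph V E \<longleftrightarrow>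
     (\<forall>u\<in>V. \<forall>v\<in>V. \<exists>p. is_walk E p \<and> set p \<subseteq> V \<and> hd p = u \<and> last p = v)"

text \<open>A cycle: a path v0 ... vk with k >= 2 together with the closing edge vk v0.\<close>
definition acyclic_graph :: "'a set \<Rightarrow> 'a set set \<Rightarrow> bool" where
  "acyclic_graph V E \<longleftrightarrow>
     \<not> (\<exists>p. is_path E p \<and> set p \<subseteq> V \<and> length p \<ge> 3 \<and> {last p, hd p} \<in> E)"

definition is_tree :: "'a set \<Rightarrow> 'a set set \<Rightarrow> bool" where
  "is_tree V E \<longleftrightarrow> simple_graph V E \<and> V \<noteq> {} \<and> connected_graph V E \<and> acyclic_graph V E"

definition tree_path :: "'a set \<Rightarrow> 'a set set \<Rightarrow> 'a \<Rightarrow> 'a \<Rightarrow> 'a list" where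
  "tree_path V E u v = (THE p. is_path E p \<and> set p \<subseteq> V \<and> hd p = u \<and> last p = v)"

definition degree :: "'a set set \<Rightarrow> 'a \<Rightarrow> nat" where
  "degree E v = card {e \<in> E. v \<in> e}"

definition degree_seq :: "'a set \<Rightarrow> 'a set set \<Rightarrow> nat multiset" where
  "degree_seq V E = image_mset (degree E) (mset_set V)"

definition laplacian :: "'a set \<Rightarrow> 'a set set \<Rightarrow> ('a \<Rightarrow> real) \<Rightarrow> 'a \<Rightarrow> real" where
  "laplacian V E f v = real (degree E v) * f v - (\<Sum>w\<in>{w \<in> V. {v, w} \<in> E}. f w)"

definition lap_eigenvector :: "'a set \<Rightarrow> 'a set set \<Rightarrow> real \<Rightarrow> ('a \<Rightarrow> real) \<Rightarrow> bool" where
  "lap_eigenvector V E \<mu> f \<longleftrightarrow>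
     (\<exists>v\<in>V. f v \<noteq> 0) \<and> (\<forall>v\<in>V. laplacian V E f v = \<mu> * f v)"

definition lap_eigenvalue :: "'a set \<Rightarrow> 'a set set \<Rightarrow> real \<Rightarrow> bool" where
  "lap_eigenvalue V E \<mu> \<longleftrightarrow> (\<exists>f. lap_eigenvector V E \<mu> f)"

definition lap_max_eig :: "'a set \<Rightarrow> 'a set set \<Rightarrow> real" where
  "lap_max_eig V E = Max {\<mu>. lap_eigenvalue V E \<mu>}"

end

theory Submission
  imports Defs "HOL-Analysis.Analysis"
begin


definition adj :: "'a set set \<Rightarrow> 'a \<Rightarrow> 'a \<Rightarrow> bool" where
  "adj E x y \<longleftrightarrow> {x, y} \<in> E"

abbreviation reach :: "'a set set \<Rightarrow> 'a \<Rightarrow> 'a \<Rightarrow> bool" where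
  "reach E \<equiv> (adj E)\<^sup>*\<^sup>*"

lemma reach_edge: "{x, y} \<in> E \<Longrightarrow> reach E x y"
  by (simp add: adj_def r_into_rtranclp)

lemma reach_sym: "reach E x y \<Longrightarrow> reach E y x"
proof (induction rule: rtranclp_induct)
  case base then show ?case by simp
next
  case (step y z)
  then have "adj E z y" by (simp add: adj_def insert_commute)
  then show ?case using step(3) by (meson converse_rtranclp_into_rtranclp)
qed

lemma reach_trans: "reach E x y \<Longrightarrow> reach E y z \<Longrightarrow> reach E x z"
  by (rule rtranclp_trans)



lemma reach_sim:
  assumes "\<And>a b. {a, b} \<in> E1 \<Longrightarrow> reach E2 a b" and "reach E1 x y"
  shows "reach E2 x y"
  using assms(2)
proof (induction rule: rtranclp_induct)
  case base then show ?case by simp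
next
  case (step y z)
  then show ?case using assms(1) by (meson adj_def rtranclp_trans)
qed

lemma reach_mono: "E1 \<subseteq> E2 \<Longrightarrow> reach E1 x y \<Longrightarrow> reach E2 x y"
  by (rule reach_sim[of E1]) (auto intro: reach_edge)

lemma walk_Cons_tl: "is_walk E (x # l) \<Longrightarrow> l \<noteq> [] \<Longrightarrow> is_walk E l"
  by (cases l) auto

lemma walk_suffix: "is_walk E (xs @ ys) \<Longrightarrow> ys \<noteq> [] \<Longrightarrow> is_walk E ys"
  by (induction xs) (auto dest: walk_Cons_tl)

lemma walk_snoc: "is_walk E p \<Longrightarrow> {last p, c} \<in> E \<Longrightarrow> is_walk E (p @ [c])"
  by (induction E p rule: is_walk.induct) auto

lemma walk_mono: "is_walk E1 p \<Longrightarrow> E1 \<subseteq> E2 \<Longrightarrow> is_walk E2 p"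
  by (induction E1 p rule: is_walk.induct) auto

lemma walk_avoid: "is_walk E p \<Longrightarrow> a \<notin> set p \<Longrightarrow> a \<in> e \<Longrightarrow> is_walk (E - {e}) p"
  by (induction E p rule: is_walk.induct) auto

lemma walk_reach: "is_walk E p \<Longrightarrow> reach E (hd p) (last p)"
proof (induction E p rule: is_walk.induct)
  case (3 E u v vs)
  have "adj E u v" using 3 by (simp add: adj_def)
  moreover have "reach E v (last (v # vs))" using 3 by simp
  ultimately have "reach E u (last (v # vs))" by (rule converse_rtranclp_into_rtranclp)
  then show ?case by simp
qed auto

lemma reach_walk: "reach E a b \<Longrightarrow> \<exists>p. is_walk E p \<and> hd p = a \<and> last p = b"
proof (induction rule: rtranclp_induct)
  case base then show ?case by (intro exI[of _ "[a]"]) auto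
next
  case (step y z)
  then obtain p where p: "is_walk E p" "hd p = a" "last p = y" by blast
  have "p \<noteq> []" using p(1) by auto
  then show ?case using p step(2) walk_snoc[of E p z]
    by (intro exI[of _ "p @ [z]"]) (auto simp: adj_def)
qed

lemma walk_set: "simple_graph V E \<Longrightarrow> is_walk E p \<Longrightarrow> hd p \<in> V \<Longrightarrow> set p \<subseteq> V"
proof (induction E p rule: is_walk.induct)
  case (3 E u v vs)
  then have "v \<in> V" unfolding simple_graph_def by (auto simp: doubleton_eq_iff)
  then show ?case using 3 by auto
qed auto

lemma walk_nonempty: "is_walk E p \<Longrightarrow> p \<noteq> []"
  by (cases p) auto

lemma walk_to_path: "is_walk E p \<Longrightarrow> \<exists>q. is_path E q \<and> hd q = hd p \<and> last q = last p \<and> set q \<subseteq> set p"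
proof (induction E p rule: is_walk.induct)
  case (2 E v)
  then show ?case by (intro exI[of _ "[v]"]) (auto simp: is_path_def)
next
  case (3 E u v vs)
  then obtain q where q: "is_path E q" "hd q = v" "last q = last (v # vs)" "set q \<subseteq> set (v # vs)"
    by auto
  have qne: "q \<noteq> []" using q(1) walk_nonempty unfolding is_path_def by blast
  show ?case
  proof (cases "u \<in> set q")
    case True
    then obtain ys zs where qs: "q = ys @ u # zs" by (meson split_list)
    have "is_walk E (u # zs)" using q(1) qs walk_suffix[of E ys "u # zs"] by (auto simp: is_path_def)
    moreover have "distinct (u # zs)" using q(1) qs by (auto simp: is_path_def)
    ultimately show ?thesis using q qs
      by (intro exI[of _ "u # zs"]) (auto simp: is_path_def)
  next
    case False
    obtain q' where q': "q = v # q'" using qne q(2) by (cases q) auto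
    have "is_walk E (u # q)" using 3(2) q(1) q' by (auto simp: is_path_def)
    moreover have "distinct (u # q)" using False q(1) by (auto simp: is_path_def)
    ultimately show ?thesis using q qne
      by (intro exI[of _ "u # q"]) (auto simp: is_path_def)
  qed
qed auto




lemma simple_edge: "simple_graph V E \<Longrightarrow> {a, b} \<in> E \<Longrightarrow> a \<noteq> b \<and> a \<in> V \<and> b \<in> V"
  unfolding simple_graph_def by (auto simp: doubleton_eq_iff)

lemma bridge_of_acyclic:
  assumes sg: "simple_graph V E" and ac: "acyclic_graph V E" and e: "{a, b} \<in> E"
  shows "\<not> reach (E - {{a, b}}) a b"
proof
  assume "reach (E - {{a, b}}) a b"
  then obtain p where p: "is_walk (E - {{a, b}}) p" "hd p = a" "last p = b" using reach_walk by metis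
  then obtain q where q: "is_path (E - {{a, b}}) q" "hd q = a" "last q = b" "set q \<subseteq> set p"
    using walk_to_path by metis
  have ab: "a \<noteq> b" "a \<in> V" "b \<in> V" using simple_edge[OF sg e] by auto
  have qw: "is_walk (E - {{a, b}}) q" using q(1) by (simp add: is_path_def)
  obtain q1 where q1: "q = a # q1" using q(2) walk_nonempty[OF qw] by (cases q) auto
  have "q1 \<noteq> []" using q1 q(3) ab by auto
  then obtain c q2 where q2: "q1 = c # q2" by (cases q1) auto
  have "q2 \<noteq> []"
  proof
    assume "q2 = []"
    then have "q = [a, b]" using q1 q2 q(3) by simp
    then show False using qw by simp
  qed
  then have len: "length q \<ge> 3" using q1 q2 by (cases q2) auto
  have "is_path E q" using q(1) walk_mono[of "E - {{a,b}}" q E] by (auto simp: is_path_def)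
  moreover have "set q \<subseteq> V" using walk_set[OF sg, of q] \<open>is_path E q\<close> q(2) ab
    by (auto simp: is_path_def)
  moreover have "{last q, hd q} \<in> E" using q(2,3) e by (simp add: insert_commute)
  ultimately show False using ac len unfolding acyclic_graph_def by blast
qed

lemma walk_minus_closing:
  assumes "is_walk E p" "distinct p" "length p \<ge> 3"
  shows "is_walk (E - {{last p, hd p}}) p"
proof -
  obtain a q where pq: "p = a # q" using assms by (cases p) auto
  obtain b r where qr: "q = b # r" using assms pq by (cases q) auto
  have rne: "r \<noteq> []" using assms pq qr by auto
  have wq: "is_walk E q" using assms(1) pq qr by simp
  have aq: "a \<notin> set q" using assms(2) pq by simp
  have lq: "last p = last q" using pq qr by simp
  have "is_walk (E - {{last p, hd p}}) q"
    using walk_avoid[OF wq aq, of "{last p, hd p}"] pq by simp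
  moreover have "{a, b} \<noteq> {last p, hd p}"
  proof
    assume "{a, b} = {last p, hd p}"
    then have "b = last q" using pq lq assms(2) qr by (auto simp: doubleton_eq_iff)
    moreover have "last q \<in> set r" using qr rne by simp
    moreover have "b \<notin> set r" using assms(2) pq qr by simp
    ultimately show False by simp
  qed
  moreover have "{a, b} \<in> E" using assms(1) pq qr by simp
  ultimately show ?thesis using pq qr by simp
qed

lemma acyclic_of_bridges:
  assumes br: "\<And>a b. {a, b} \<in> E \<Longrightarrow> \<not> reach (E - {{a, b}}) a b"
  shows "acyclic_graph V E"
  unfolding acyclic_graph_def
proof
  assume "\<exists>p. is_path E p \<and> set p \<subseteq> V \<and> length p \<ge> 3 \<and> {last p, hd p} \<in> E"
  then obtain p where p: "is_path E p" "length p \<ge> 3" "{last p, hd p} \<in> E" by blast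
  have "is_walk (E - {{last p, hd p}}) p" using walk_minus_closing p by (auto simp: is_path_def)
  then have "reach (E - {{last p, hd p}}) (hd p) (last p)" by (rule walk_reach)
  then have "reach (E - {{last p, hd p}}) (last p) (hd p)" by (rule reach_sym)
  then show False using br[OF p(3)] by simp
qed

lemma path_unique:
  assumes sg: "simple_graph V E" and ac: "acyclic_graph V E"
  shows "is_path E p \<Longrightarrow> is_path E q \<Longrightarrow> hd p = hd q \<Longrightarrow> last p = last q \<Longrightarrow> p = q"
proof (induction p arbitrary: q)
  case Nil then show ?case by (simp add: is_path_def)
next
  case (Cons a p')
  have qne: "q \<noteq> []" using Cons.prems(2) walk_nonempty by (auto simp: is_path_def)
  then obtain q' where q: "q = a # q'" using Cons.prems(3) by (cases q) auto
  show ?case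
  proof (cases "p' = []")
    case True
    then have "last q = a" using Cons.prems(4) by simp
    then have "q' = []" using q Cons.prems(2) by (cases "q' = []") (auto simp: is_path_def)
    then show ?thesis using q True by simp
  next
    case False
    have "last p' \<noteq> a" using False Cons.prems(1) by (auto simp: is_path_def)
    then have q'ne: "q' \<noteq> []" using Cons.prems(4) q False by auto
    have wp': "is_walk E p'" "distinct p'" "a \<notin> set p'"
      using Cons.prems(1) False walk_Cons_tl by (auto simp: is_path_def)
    have wq': "is_walk E q'" "distinct q'" "a \<notin> set q'"
      using Cons.prems(2) q q'ne walk_Cons_tl by (auto simp: is_path_def)
    have lst: "last p' = last q'" using Cons.prems(4) q False q'ne by simp
    show ?thesis
    proof (cases "hd p' = hd q'")
      case True
      then have "p' = q'" using Cons.IH[of q'] wp' wq' lst by (auto simp: is_path_def)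
      then show ?thesis using q by simp
    next
      case hne: False
      define x where "x = hd p'"
      define y where "y = hd q'"
      have ex: "{a, x} \<in> E" using Cons.prems(1) False unfolding x_def by (cases p') (auto simp: is_path_def)
      have ey: "{a, y} \<in> E" using Cons.prems(2) q q'ne unfolding y_def by (cases q') (auto simp: is_path_def)
      let ?F = "E - {{a, x}}"
      have "a \<noteq> y" using wq' q'ne unfolding y_def by (cases q') auto
      then have "{a, y} \<noteq> {a, x}" using hne unfolding x_def y_def by (auto simp: doubleton_eq_iff)
      then have r1: "reach ?F a y" using ey by (intro reach_edge) auto
      have "is_walk ?F q'" using walk_avoid[OF wq'(1) wq'(3)] by simp
      then have r2: "reach ?F y (last q')" using walk_reach unfolding y_def by blast
      have "is_walk ?F p'" using walk_avoid[OF wp'(1) wp'(3)] by simp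
      then have r3: "reach ?F x (last p')" using walk_reach unfolding x_def by blast
      have "reach ?F a x" using r1 r2 r3 lst by (metis reach_sym reach_trans)
      then show ?thesis using bridge_of_acyclic[OF sg ac ex] by simp
    qed
  qed
qed

lemma tree_path_props:
  assumes t: "is_tree V E" and a: "a \<in> V" and b: "b \<in> V"
  shows "is_path E (tree_path V E a b) \<and> set (tree_path V E a b) \<subseteq> V \<and>
         hd (tree_path V E a b) = a \<and> last (tree_path V E a b) = b"
proof -
  have sg: "simple_graph V E" and ac: "acyclic_graph V E" and cn: "connected_graph V E"
    using t by (auto simp: is_tree_def)
  obtain p where p: "is_walk E p" "set p \<subseteq> V" "hd p = a" "last p = b"
    using cn a b unfolding connected_graph_def by blast
  obtain q where q: "is_path E q" "hd q = a" "last q = b" "set q \<subseteq> set p"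
    using walk_to_path[OF p(1)] p by metis
  have ex: "\<exists>!q. is_path E q \<and> set q \<subseteq> V \<and> hd q = a \<and> last q = b"
    using q p(2) path_unique[OF sg ac] by (intro ex1I[of _ q]) auto
  show ?thesis unfolding tree_path_def by (rule theI'[OF ex])
qed




lemma reach_add_edge:
  assumes "reach (G \<union> {{c, d}}) x y"
  shows "reach G x y \<or> (reach G x c \<and> reach G d y) \<or> (reach G x d \<and> reach G c y)"
  using assms
proof (induction rule: rtranclp_induct)
  case base then show ?case by simp
next
  case (step y z)
  have "{y, z} \<in> G \<or> {y, z} = {c, d}" using step(2) by (auto simp: adj_def)
  then show ?case
  proof
    assume "{y, z} \<in> G"
    then have "reach G y z" by (rule reach_edge)
    then show ?thesis using step(3) by (meson reach_trans)
  next
    assume "{y, z} = {c, d}"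
    then have "(y = c \<and> z = d) \<or> (y = d \<and> z = c)" by (auto simp: doubleton_eq_iff)
    then show ?thesis using step(3) by (metis reach_sym reach_trans rtranclp.rtrancl_refl)
  qed
qed

lemma reach_cut:
  assumes "\<And>x y. {x, y} \<in> F \<Longrightarrow> (x \<in> C \<longleftrightarrow> y \<in> C)" "reach F a b"
  shows "a \<in> C \<longleftrightarrow> b \<in> C"
  using assms(2)
proof (induction rule: rtranclp_induct)
  case (step y z) then show ?case using assms(1) by (auto simp: adj_def)
qed simp

lemma simple_finite: "simple_graph V E \<Longrightarrow> finite E"
proof -
  assume sg: "simple_graph V E"
  then have "E \<subseteq> Pow V" unfolding simple_graph_def by auto
  moreover have "finite V" using sg unfolding simple_graph_def by auto
  ultimately show "finite E" by (meson finite_Pow_iff finite_subset)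
qed

locale swap =
  fixes V :: "'a set" and E :: "'a set set" and u1 v1 u2 v2 :: 'a
  assumes tree: "is_tree V E"
    and e1: "{u1, v1} \<in> E" and e2: "{u2, v2} \<in> E"
    and distinct_v: "v1 \<noteq> v2"
    and pa1: "u1 \<notin> set (tree_path V E v1 v2)" and pa2: "u2 \<notin> set (tree_path V E v1 v2)"
begin

abbreviation "E0 \<equiv> E - {{u1, v1}, {u2, v2}}"
abbreviation "E2 \<equiv> (E - {{u1, v1}, {u2, v2}}) \<union> {{u1, v2}, {u2, v1}}"

lemma sg: "simple_graph V E" and ac: "acyclic_graph V E" and cn: "connected_graph V E"
  using tree unfolding is_tree_def by auto

lemma fV: "finite V" using sg unfolding simple_graph_def by blast
lemma fE: "finite E" using simple_finite[OF sg] .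

lemma inV: "u1 \<in> V" "v1 \<in> V" "u2 \<in> V" "v2 \<in> V" "u1 \<noteq> v1" "u2 \<noteq> v2"
  using simple_edge[OF sg e1] simple_edge[OF sg e2] by auto

abbreviation "P \<equiv> tree_path V E v1 v2"

lemma Pprops: "is_path E P" "hd P = v1" "last P = v2"
  using tree_path_props[OF tree inV(2) inV(4)] by auto

lemma v_in_P: "v1 \<in> set P" "v2 \<in> set P"
proof -
  have "P \<noteq> []" using Pprops(1) walk_nonempty by (auto simp: is_path_def)
  then show "v1 \<in> set P" "v2 \<in> set P" using Pprops by (metis hd_in_set, metis last_in_set)
qed

lemma neq: "u1 \<noteq> v2" "u2 \<noteq> v1" using v_in_P pa1 pa2 by auto

lemma edges_ne: "{u1, v1} \<noteq> {u2, v2}"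
  using neq distinct_v by (auto simp: doubleton_eq_iff)

lemma P0: "reach E0 v1 v2"
proof -
  have w: "is_walk E P" using Pprops by (simp add: is_path_def)
  have "is_walk (E - {{u1, v1}}) P" using walk_avoid[OF w pa1] by simp
  then have "is_walk (E - {{u1, v1}} - {{u2, v2}}) P" using walk_avoid[OF _ pa2] by simp
  moreover have "E - {{u1, v1}} - {{u2, v2}} = E0" by auto
  ultimately have "is_walk E0 P" by simp
  then show ?thesis using walk_reach Pprops by metis
qed

lemma B1: "\<not> reach (E - {{u1, v1}}) u1 v1" using bridge_of_acyclic[OF sg ac e1] .
lemma B2: "\<not> reach (E - {{u2, v2}}) u2 v2" using bridge_of_acyclic[OF sg ac e2] .

lemma E0_sub1: "E0 \<union> {{u2, v2}} \<subseteq> E - {{u1, v1}}" using edges_ne e2 by blast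
lemma E0_sub2: "E0 \<union> {{u1, v1}} \<subseteq> E - {{u2, v2}}" using edges_ne e1 by blast

lemma E0_sub1': "E0 \<subseteq> E - {{u1, v1}}" using E0_sub1 by blast
lemma E0_sub2': "E0 \<subseteq> E - {{u2, v2}}" using E0_sub2 by blast

lemma n1: "\<not> reach E0 u1 v1"
proof
  assume "reach E0 u1 v1"
  then have "reach (E - {{u1, v1}}) u1 v1" by (rule reach_mono[OF E0_sub1'])
  then show False using B1 by simp
qed
lemma n3: "\<not> reach E0 u2 v2"
proof
  assume "reach E0 u2 v2"
  then have "reach (E - {{u2, v2}}) u2 v2" by (rule reach_mono[OF E0_sub2'])
  then show False using B2 by simp
qed
lemma n2: "\<not> reach E0 u1 v2"
proof
  assume "reach E0 u1 v2"
  moreover have "reach E0 v2 v1" using P0 by (rule reach_sym)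
  ultimately have "reach E0 u1 v1" by (rule reach_trans)
  then show False using n1 by simp
qed
lemma n4: "\<not> reach E0 u2 v1"
proof
  assume "reach E0 u2 v1"
  then have "reach E0 u2 v2" using P0 by (rule reach_trans)
  then show False using n3 by simp
qed
lemma n5: "\<not> reach E0 u1 u2"
proof
  assume a: "reach E0 u1 u2"
  let ?F = "E - {{u1, v1}}"
  have r1: "reach ?F u1 u2" using a by (rule reach_mono[OF E0_sub1'])
  have r2: "reach ?F u2 v2" using E0_sub1 by (intro reach_edge) blast
  have "reach E0 v2 v1" using P0 by (rule reach_sym)
  then have r3: "reach ?F v2 v1" by (rule reach_mono[OF E0_sub1'])
  have "reach ?F u1 v1" using reach_trans[OF reach_trans[OF r1 r2] r3] .
  then show False using B1 by simp
qed

lemma u_neq: "u1 \<noteq> u2" using n5 by auto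

lemma new_notin: "{u1, v2} \<notin> E" "{u2, v1} \<notin> E"
proof -
  show "{u1, v2} \<notin> E"
  proof
    assume "{u1, v2} \<in> E"
    moreover have "{u1, v2} \<noteq> {u1, v1}" "{u1, v2} \<noteq> {u2, v2}"
      using distinct_v u_neq neq by (auto simp: doubleton_eq_iff)
    ultimately have "{u1, v2} \<in> E0" by simp
    then have "reach E0 u1 v2" by (rule reach_edge)
    then show False using n2 by simp
  qed
  show "{u2, v1} \<notin> E"
  proof
    assume "{u2, v1} \<in> E"
    moreover have "{u2, v1} \<noteq> {u1, v1}" "{u2, v1} \<noteq> {u2, v2}"
      using distinct_v u_neq neq by (auto simp: doubleton_eq_iff)
    ultimately have "{u2, v1} \<in> E0" by simp
    then have "reach E0 u2 v1" by (rule reach_edge)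
    then show False using n4 by simp
  qed
qed

lemma sg2: "simple_graph V E2"
  unfolding simple_graph_def
proof (intro conjI ballI)
  show "finite V" by (rule fV)
  fix e assume "e \<in> E2"
  then consider "e \<in> E" | "e = {u1, v2}" | "e = {u2, v1}" by blast
  then show "\<exists>u v. e = {u, v} \<and> u \<noteq> v \<and> u \<in> V \<and> v \<in> V"
  proof cases
    case 1 then show ?thesis using sg unfolding simple_graph_def by blast
  next
    case 2 then show ?thesis using inV neq by blast
  next
    case 3 then show ?thesis using inV neq by blast
  qed
qed

lemma reach_E_E2: "reach E x y \<Longrightarrow> reach E2 x y"
proof (rule reach_sim[of E])
  fix a b assume ab: "{a, b} \<in> E"
  have r0: "reach E2 v1 v2" using P0 by (rule reach_mono[rotated]) blast
  have r1: "reach E2 u1 v2" "reach E2 u2 v1" by (auto intro: reach_edge)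
  have r2: "reach E2 u1 v1" using reach_trans[OF r1(1) reach_sym[OF r0]] .
  have r3: "reach E2 u2 v2" using reach_trans[OF r1(2) r0] .
  consider "{a, b} \<in> E0" | "{a, b} = {u1, v1}" | "{a, b} = {u2, v2}" using ab by blast
  then show "reach E2 a b"
  proof cases
    case 1 then show ?thesis by (intro reach_edge) blast
  next
    case 2
    then have "(a = u1 \<and> b = v1) \<or> (a = v1 \<and> b = u1)" by (auto simp: doubleton_eq_iff)
    then show ?thesis using r2 reach_sym[OF r2] by auto
  next
    case 3
    then have "(a = u2 \<and> b = v2) \<or> (a = v2 \<and> b = u2)" by (auto simp: doubleton_eq_iff)
    then show ?thesis using r3 reach_sym[OF r3] by auto
  qed
qed

lemma cn2: "connected_graph V E2"
  unfolding connected_graph_def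
proof (intro ballI)
  fix a b assume a: "a \<in> V" and b: "b \<in> V"
  obtain p where p: "is_walk E p" "hd p = a" "last p = b" using cn a b unfolding connected_graph_def by blast
  have "reach E (hd p) (last p)" using walk_reach[OF p(1)] .
  then have "reach E2 a b" using p reach_E_E2 by simp
  then obtain q where q: "is_walk E2 q" "hd q = a" "last q = b" using reach_walk by metis
  then show "\<exists>p. is_walk E2 p \<and> set p \<subseteq> V \<and> hd p = a \<and> last p = b"
    using walk_set[OF sg2 q(1)] a by auto
qed

end



lemma reach_cong: "reach G x y \<Longrightarrow> reach G x z \<longleftrightarrow> reach G y z"
  by (meson reach_sym reach_trans)

context swap begin

lemma gamma_ii:
  assumes ab: "{a, b} \<in> E0" and h1: "reach (E0 - {{a, b}}) v1 a" and h2: "reach (E0 - {{a, b}}) b v2"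
  shows "\<not> reach (E2 - {{a, b}}) a b"
proof
  assume r: "reach (E2 - {{a, b}}) a b"
  define G where "G = E0 - {{a, b}}"
  have h1': "reach G v1 a" and h2': "reach G b v2" using h1 h2 by (simp_all add: G_def)
  have abE: "{a, b} \<in> E" using ab by blast
  have N1: "\<not> reach (E - {{a, b}}) a b" using bridge_of_acyclic[OF sg ac abE] .
  have Gs1: "G \<subseteq> E - {{a, b}}" and Gs2: "G \<subseteq> E - {{u1, v1}}" and Gs3: "G \<subseteq> E - {{u2, v2}}"
    unfolding G_def by blast+
  define C where "C = {x. reach G x a \<or> reach G x u2}"
  have nba: "\<not> reach G b a"
  proof
    assume "reach G b a"
    then have "reach G a b" by (rule reach_sym)
    then have "reach (E - {{a, b}}) a b" by (rule reach_mono[OF Gs1])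
    then show False using N1 by simp
  qed
  have nbu2: "\<not> reach G b u2"
  proof
    assume "reach G b u2"
    then have "reach G u2 b" by (rule reach_sym)
    then have "reach G u2 v2" using h2' by (rule reach_trans)
    then have "reach (E - {{u2, v2}}) u2 v2" by (rule reach_mono[OF Gs3])
    then show False using B2 by simp
  qed
  have bC: "b \<notin> C" using nba nbu2 by (simp add: C_def)
  have v2C: "v2 \<notin> C"
  proof
    assume "v2 \<in> C"
    then have "reach G v2 a \<or> reach G v2 u2" by (simp add: C_def)
    then have "reach G b a \<or> reach G b u2" using reach_trans[OF h2', of a] reach_trans[OF h2', of u2] by blast
    then show False using nba nbu2 by simp
  qed
  have u1C: "u1 \<notin> C"
  proof
    assume "u1 \<in> C"
    then have "reach G u1 a \<or> reach G u1 u2" by (simp add: C_def)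
    then show False
    proof
      assume "reach G u1 a"
      then have "reach G u1 v1" using reach_sym[OF h1'] by (rule reach_trans)
      then have "reach (E - {{u1, v1}}) u1 v1" by (rule reach_mono[OF Gs2])
      then show False using B1 by simp
    next
      assume a1: "reach G u1 u2"
      let ?F = "E - {{u1, v1}}"
      have s1: "reach ?F u1 u2" using a1 by (rule reach_mono[OF Gs2])
      have s2: "reach ?F u2 v2" using e2 edges_ne by (intro reach_edge) blast
      have s3: "reach ?F v2 b" using reach_sym[OF h2'] by (rule reach_mono[OF Gs2])
      have "{a, b} \<noteq> {u1, v1}" using ab by blast
      then have s4: "reach ?F b a" using abE by (intro reach_edge) (auto simp: insert_commute)
      have s5: "reach ?F a v1" using reach_sym[OF h1'] by (rule reach_mono[OF Gs2])
      have "reach ?F u1 v1" using reach_trans[OF reach_trans[OF reach_trans[OF reach_trans[OF s1 s2] s3] s4] s5] .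
      then show False using B1 by simp
    qed
  qed
  have cut: "x \<in> C \<longleftrightarrow> y \<in> C" if xy: "{x, y} \<in> E2 - {{a, b}}" for x y
  proof -
    have "{x, y} \<in> G \<or> {x, y} = {u1, v2} \<or> {x, y} = {u2, v1}" using xy unfolding G_def by blast
    then show ?thesis
    proof (elim disjE)
      assume "{x, y} \<in> G"
      then have "reach G x y" by (rule reach_edge)
      then show ?thesis unfolding C_def using reach_cong[of G x y] by simp
    next
      assume "{x, y} = {u1, v2}"
      then show ?thesis using u1C v2C by (auto simp: doubleton_eq_iff)
    next
      assume "{x, y} = {u2, v1}"
      moreover have "u2 \<in> C" "v1 \<in> C" using h1' by (auto simp: C_def)
      ultimately show ?thesis by (auto simp: doubleton_eq_iff)
    qed
  qed
  have "a \<in> C" by (simp add: C_def)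
  then show False using reach_cut[OF cut r] bC by blast
qed

lemma ac2: "acyclic_graph V E2"
proof (rule acyclic_of_bridges)
  fix a b assume ab: "{a, b} \<in> E2"
  consider "{a, b} = {u1, v2}" | "{a, b} = {u2, v1}" | "{a, b} \<in> E0" using ab by blast
  then show "\<not> reach (E2 - {{a, b}}) a b"
  proof cases
    case 1
    define C where "C = {x. reach E0 x u1}"
    have cut: "x \<in> C \<longleftrightarrow> y \<in> C" if xy: "{x, y} \<in> E2 - {{u1, v2}}" for x y
    proof -
      have "{x, y} \<in> E0 \<or> {x, y} = {u2, v1}" using xy by blast
      then show ?thesis
      proof
        assume "{x, y} \<in> E0"
        then have "reach E0 x y" by (rule reach_edge)
        then show ?thesis unfolding C_def using reach_cong[of E0 x y] by simp
      next
        assume "{x, y} = {u2, v1}"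
        moreover have "u2 \<notin> C" "v1 \<notin> C" using n5 n1 unfolding C_def by (auto dest: reach_sym)
        ultimately show ?thesis by (auto simp: doubleton_eq_iff)
      qed
    qed
    have "u1 \<in> C" "v2 \<notin> C" using n2 unfolding C_def by (auto dest: reach_sym)
    then have nr: "\<not> reach (E2 - {{u1, v2}}) u1 v2" using reach_cut[OF cut] by blast
    show ?thesis
    proof
      assume r: "reach (E2 - {{a, b}}) a b"
      have "(a = u1 \<and> b = v2) \<or> (a = v2 \<and> b = u1)" using 1 by (auto simp: doubleton_eq_iff)
      then show False
      proof
        assume "a = u1 \<and> b = v2" then show False using r nr by simp
      next
        assume "a = v2 \<and> b = u1"
        then have "reach (E2 - {{u1, v2}}) v2 u1" using r by (simp add: insert_commute)
        then show False using nr by (auto dest: reach_sym)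
      qed
    qed
  next
    case 2
    define C where "C = {x. reach E0 x u2}"
    have cut: "x \<in> C \<longleftrightarrow> y \<in> C" if xy: "{x, y} \<in> E2 - {{u2, v1}}" for x y
    proof -
      have "{x, y} \<in> E0 \<or> {x, y} = {u1, v2}" using xy by blast
      then show ?thesis
      proof
        assume "{x, y} \<in> E0"
        then have "reach E0 x y" by (rule reach_edge)
        then show ?thesis unfolding C_def using reach_cong[of E0 x y] by simp
      next
        assume "{x, y} = {u1, v2}"
        moreover have "u1 \<notin> C" "v2 \<notin> C" using n5 n3 unfolding C_def by (auto dest: reach_sym)
        ultimately show ?thesis by (auto simp: doubleton_eq_iff)
      qed
    qed
    have "u2 \<in> C" "v1 \<notin> C" using n4 unfolding C_def by (auto dest: reach_sym)
    then have nr: "\<not> reach (E2 - {{u2, v1}}) u2 v1" using reach_cut[OF cut] by blast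
    show ?thesis
    proof
      assume r: "reach (E2 - {{a, b}}) a b"
      have "(a = u2 \<and> b = v1) \<or> (a = v1 \<and> b = u2)" using 2 by (auto simp: doubleton_eq_iff)
      then show False
      proof
        assume "a = u2 \<and> b = v1" then show False using r nr by simp
      next
        assume "a = v1 \<and> b = u2"
        then have "reach (E2 - {{u2, v1}}) v1 u2" using r by (simp add: insert_commute)
        then show False using nr by (auto dest: reach_sym)
      qed
    qed
  next
    case 3
    note ab0 = 3
    define G where "G = E0 - {{a, b}}"
    have "E0 = G \<union> {{a, b}}" using ab0 unfolding G_def by blast
    then have "reach (G \<union> {{a, b}}) v1 v2" using P0 by simp
    from reach_add_edge[OF this]
    consider "reach G v1 v2" | "reach G v1 a \<and> reach G b v2" | "reach G v1 b \<and> reach G a v2" by blast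
    then show ?thesis
    proof cases
      case 1
      have abE: "{a, b} \<in> E" using ab0 by blast
      have N1: "\<not> reach (E - {{a, b}}) a b" using bridge_of_acyclic[OF sg ac abE] .
      let ?F = "E - {{a, b}}"
      have Gs: "G \<subseteq> ?F" unfolding G_def by blast
      have rv: "reach ?F v1 v2" using 1 by (rule reach_mono[OF Gs])
      have f1: "reach ?F u1 v1" using e1 ab0 by (intro reach_edge) blast
      have f2: "reach ?F u2 v2" using e2 ab0 by (intro reach_edge) blast
      show ?thesis
      proof
        assume "reach (E2 - {{a, b}}) a b"
        then have "reach ?F a b"
        proof (rule reach_sim[rotated])
          fix x y assume xy: "{x, y} \<in> E2 - {{a, b}}"
          then have "{x, y} \<in> G \<or> {x, y} = {u1, v2} \<or> {x, y} = {u2, v1}" unfolding G_def by blast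
          then show "reach ?F x y"
          proof (elim disjE)
            assume "{x, y} \<in> G" then show ?thesis using Gs by (intro reach_edge) blast
          next
            assume xy: "{x, y} = {u1, v2}"
            have r: "reach ?F u1 v2" using reach_trans[OF f1 rv] .
            from xy have "(x = u1 \<and> y = v2) \<or> (x = v2 \<and> y = u1)" by (auto simp: doubleton_eq_iff)
            then show ?thesis using r reach_sym[OF r] by auto
          next
            assume xy: "{x, y} = {u2, v1}"
            have r: "reach ?F u2 v1" using reach_trans[OF f2 reach_sym[OF rv]] .
            from xy have "(x = u2 \<and> y = v1) \<or> (x = v1 \<and> y = u2)" by (auto simp: doubleton_eq_iff)
            then show ?thesis using r reach_sym[OF r] by auto
          qed
        qed
        then show False using N1 by simp
      qed
    next
      case 2
      then show ?thesis using gamma_ii[OF ab0] unfolding G_def by blast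
    next
      case 3
      have ba: "{b, a} \<in> E0" using ab0 by (simp add: insert_commute)
      have "\<not> reach (E2 - {{b, a}}) b a"
        using gamma_ii[OF ba] 3 unfolding G_def by (simp add: insert_commute)
      then have "\<not> reach (E2 - {{a, b}}) b a" by (simp add: insert_commute)
      then show ?thesis by (auto dest: reach_sym)
    qed
  qed
qed

lemma tree2: "is_tree V E2"
  using sg2 cn2 ac2 tree unfolding is_tree_def by blast

end



lemma card2: "A \<noteq> B \<Longrightarrow> card {e \<in> {A, B}. v \<in> e} = (if v \<in> A then 1 else 0) + (if v \<in> B then 1 else (0::nat))"
proof -
  assume ne: "A \<noteq> B"
  have "{e \<in> {A, B}. v \<in> e} = (if v \<in> A then {A} else {}) \<union> (if v \<in> B then {B} else {})" by auto
  then show ?thesis using ne by (auto simp: card_insert_if)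
qed

context swap begin

lemma deg: "Defs.degree E2 v = Defs.degree E v"
proof -
  have f0: "finite E0" using fE by blast
  have s2: "{e \<in> E2. v \<in> e} = {e \<in> E0. v \<in> e} \<union> {e \<in> {{u1, v2}, {u2, v1}}. v \<in> e}" by blast
  have s1: "{e \<in> E. v \<in> e} = {e \<in> E0. v \<in> e} \<union> {e \<in> {{u1, v1}, {u2, v2}}. v \<in> e}" using e1 e2 by blast
  have d2: "{e \<in> E0. v \<in> e} \<inter> {e \<in> {{u1, v2}, {u2, v1}}. v \<in> e} = {}" using new_notin by blast
  have d1: "{e \<in> E0. v \<in> e} \<inter> {e \<in> {{u1, v1}, {u2, v2}}. v \<in> e} = {}" by blast
  have ne2: "{u1, v2} \<noteq> {u2, v1}" using u_neq neq inV by (auto simp: doubleton_eq_iff)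
  have c2: "card {e \<in> E2. v \<in> e} = card {e \<in> E0. v \<in> e} + card {e \<in> {{u1, v2}, {u2, v1}}. v \<in> e}"
    unfolding s2 by (rule card_Un_disjoint) (use f0 d2 in auto)
  have c1: "card {e \<in> E. v \<in> e} = card {e \<in> E0. v \<in> e} + card {e \<in> {{u1, v1}, {u2, v2}}. v \<in> e}"
    unfolding s1 by (rule card_Un_disjoint) (use f0 d1 in auto)
  have "card {e \<in> {{u1, v2}, {u2, v1}}. v \<in> e} = card {e \<in> {{u1, v1}, {u2, v2}}. v \<in> e}"
    unfolding card2[OF ne2] card2[OF edges_ne] using inV neq u_neq distinct_v by auto
  then show ?thesis unfolding Defs.degree_def using c1 c2 by simp
qed

lemma degseq: "degree_seq V E2 = degree_seq V E"
  unfolding degree_seq_def using deg by presburger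

end



definition nbrs :: "'a set \<Rightarrow> 'a set set \<Rightarrow> 'a \<Rightarrow> 'a set" where
  "nbrs V E v = {w \<in> V. {v, w} \<in> E}"

definition ip :: "'a set \<Rightarrow> ('a \<Rightarrow> real) \<Rightarrow> ('a \<Rightarrow> real) \<Rightarrow> real" where
  "ip V x y = (\<Sum>v\<in>V. x v * y v)"

definition bf :: "'a set \<Rightarrow> 'a set set \<Rightarrow> ('a \<Rightarrow> real) \<Rightarrow> ('a \<Rightarrow> real) \<Rightarrow> real" where
  "bf V E x y = (\<Sum>v\<in>V. x v * laplacian V E y v)"

definition qf :: "'a set \<Rightarrow> 'a set set \<Rightarrow> ('a \<Rightarrow> real) \<Rightarrow> ('a \<Rightarrow> real) \<Rightarrow> real" where
  "qf V E x y = (\<Sum>p\<in>Sigma V (nbrs V E). (x (fst p) - x (snd p)) * (y (fst p) - y (snd p)))"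

lemma degree_nbrs:
  assumes sg: "simple_graph V E"
  shows "Defs.degree E v = card (nbrs V E v)"
proof -
  have "bij_betw (\<lambda>w. {v, w}) (nbrs V E v) {e \<in> E. v \<in> e}"
  proof (rule bij_betwI')
    fix w w' assume w: "w \<in> nbrs V E v" and w': "w' \<in> nbrs V E v"
    have "w \<noteq> v" using w sg unfolding nbrs_def simple_graph_def by (auto simp: doubleton_eq_iff)
    then show "({v, w} = {v, w'}) = (w = w')" by (auto simp: doubleton_eq_iff)
  next
    fix w assume "w \<in> nbrs V E v" then show "{v, w} \<in> {e \<in> E. v \<in> e}" by (auto simp: nbrs_def)
  next
    fix e assume e: "e \<in> {e \<in> E. v \<in> e}"
    then obtain a b where ab: "e = {a, b}" "a \<in> V" "b \<in> V" using sg unfolding simple_graph_def by blast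
    show "\<exists>w\<in>nbrs V E v. e = {v, w}"
    proof (cases "v = a")
      case True then show ?thesis using ab e by (auto simp: nbrs_def)
    next
      case False then have "v = b" using ab e by auto
      then show ?thesis using ab e by (intro bexI[of _ a]) (auto simp: nbrs_def insert_commute)
    qed
  qed
  then show ?thesis unfolding Defs.degree_def by (simp add: bij_betw_same_card)
qed

lemma nbrs_sub: "nbrs V E v \<subseteq> V" by (auto simp: nbrs_def)

lemma laplacian_nbrs: "laplacian V E f v = real (Defs.degree E v) * f v - (\<Sum>w\<in>nbrs V E v. f w)"
  unfolding laplacian_def nbrs_def by simp

lemma sum_swap_D:
  fixes g :: "'a \<Rightarrow> 'a \<Rightarrow> real"
  shows "(\<Sum>p\<in>Sigma V (nbrs V E). g (snd p) (fst p)) = (\<Sum>p\<in>Sigma V (nbrs V E). g (fst p) (snd p))"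
proof -
  have sw: "prod.swap ` Sigma V (nbrs V E) = Sigma V (nbrs V E)"
    by (auto simp: nbrs_def insert_commute image_iff)
  have "(\<Sum>p\<in>Sigma V (nbrs V E). g (fst p) (snd p)) = (\<Sum>p\<in>prod.swap ` Sigma V (nbrs V E). g (fst p) (snd p))"
    using sw by simp
  also have "\<dots> = (\<Sum>p\<in>Sigma V (nbrs V E). g (snd p) (fst p))"
    by (subst sum.reindex) auto
  finally show ?thesis by simp
qed

lemma sumD:
  assumes "finite V"
  shows "(\<Sum>p\<in>Sigma V (nbrs V E). g p) = (\<Sum>v\<in>V. \<Sum>w\<in>nbrs V E v. g (v, w))"
proof -
  have fN: "\<And>v. finite (nbrs V E v)" using assms nbrs_sub finite_subset by metis
  show ?thesis by (subst sum.Sigma) (auto simp: assms fN split_def)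
qed

lemma qf_bf:
  assumes sg: "simple_graph V E"
  shows "qf V E x y = 2 * bf V E x y"
proof -
  let ?D = "Sigma V (nbrs V E)"
  have fV: "finite V" using sg by (simp add: simple_graph_def)
  have fN: "\<And>v. finite (nbrs V E v)" using fV nbrs_sub finite_subset by metis
  have e1: "(\<Sum>p\<in>?D. x (fst p) * y (fst p)) = (\<Sum>v\<in>V. real (Defs.degree E v) * x v * y v)"
    by (simp add: sumD[OF fV] degree_nbrs[OF sg] mult.assoc)
  have e2: "(\<Sum>p\<in>?D. x (fst p) * y (snd p)) = (\<Sum>v\<in>V. x v * (\<Sum>w\<in>nbrs V E v. y w))"
    by (simp add: sumD[OF fV] sum_distrib_left)
  have e3: "(\<Sum>p\<in>?D. x (snd p) * y (snd p)) = (\<Sum>p\<in>?D. x (fst p) * y (fst p))"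
    using sum_swap_D[of "\<lambda>a b. x b * y b"] by simp
  have e4: "(\<Sum>p\<in>?D. x (snd p) * y (fst p)) = (\<Sum>p\<in>?D. x (fst p) * y (snd p))"
    using sum_swap_D[of "\<lambda>a b. x a * y b"] by simp
  have "qf V E x y = (\<Sum>p\<in>?D. x (fst p) * y (fst p)) - (\<Sum>p\<in>?D. x (fst p) * y (snd p))
      - (\<Sum>p\<in>?D. x (snd p) * y (fst p)) + (\<Sum>p\<in>?D. x (snd p) * y (snd p))"
    unfolding qf_def by (simp add: algebra_simps sum.distrib sum_subtractf)
  also have "\<dots> = 2 * ((\<Sum>v\<in>V. real (Defs.degree E v) * x v * y v) - (\<Sum>v\<in>V. x v * (\<Sum>w\<in>nbrs V E v. y w)))"
    using e1 e2 e3 e4 by simp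
  also have "\<dots> = 2 * bf V E x y"
    unfolding bf_def laplacian_nbrs by (simp add: algebra_simps sum_subtractf)
  finally show ?thesis .
qed

lemma bf_sym: "simple_graph V E \<Longrightarrow> bf V E x y = bf V E y x"
  using qf_bf[of V E x y] qf_bf[of V E y x] unfolding qf_def by (simp add: mult.commute)

lemma bf_expand:
  assumes sg: "simple_graph V E"
  shows "bf V E (\<lambda>w. x w + t * y w) (\<lambda>w. x w + t * y w) = bf V E x x + 2 * t * bf V E y x + t^2 * bf V E y y"
proof -
  let ?D = "Sigma V (nbrs V E)"
  have "qf V E (\<lambda>w. x w + t * y w) (\<lambda>w. x w + t * y w) =
     (\<Sum>p\<in>?D. (x (fst p) - x (snd p)) * (x (fst p) - x (snd p)) + 2 * t * ((y (fst p) - y (snd p)) * (x (fst p) - x (snd p)))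
        + t^2 * ((y (fst p) - y (snd p)) * (y (fst p) - y (snd p))))"
    unfolding qf_def by (rule sum.cong) (auto simp: algebra_simps power2_eq_square)
  also have "\<dots> = qf V E x x + 2 * t * qf V E y x + t^2 * qf V E y y"
    unfolding qf_def by (simp add: sum.distrib sum_distrib_left)
  finally have "qf V E (\<lambda>w. x w + t * y w) (\<lambda>w. x w + t * y w) = qf V E x x + 2 * t * qf V E y x + t^2 * qf V E y y" .
  then show ?thesis using qf_bf[OF sg] by simp
qed

lemma ip_expand:
  "ip V (\<lambda>w. x w + t * y w) (\<lambda>w. x w + t * y w) = ip V x x + 2 * t * ip V y x + t^2 * ip V y y"
proof -
  have "ip V (\<lambda>w. x w + t * y w) (\<lambda>w. x w + t * y w) = (\<Sum>v\<in>V. x v * x v + 2 * t * (y v * x v) + t^2 * (y v * y v))"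
    unfolding ip_def by (rule sum.cong) (auto simp: algebra_simps power2_eq_square)
  then show ?thesis unfolding ip_def by (simp add: sum.distrib sum_distrib_left)
qed

lemma ip_nonneg: "ip V x x \<ge> 0"
  unfolding ip_def by (simp add: sum_nonneg)




lemma coord_cont: "continuous_on A (\<lambda>x::'a \<Rightarrow> real. x i)"
  by (rule continuous_on_subset[OF continuous_on_product_coordinates]) simp

lemma bf_cont: "continuous_on A (\<lambda>x::'a \<Rightarrow> real. bf V E x x)"
  unfolding bf_def laplacian_def
  by (intro continuous_intros coord_cont)

lemma ip_cont: "continuous_on A (\<lambda>x::'a \<Rightarrow> real. ip V x x)"
  unfolding ip_def by (intro continuous_intros coord_cont)

lemma lap_scale:
  assumes "\<And>w. w \<in> V \<Longrightarrow> y w = x w / c" "v \<in> V"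
  shows "laplacian V E y v = laplacian V E x v / c"
  unfolding laplacian_def using assms by (simp add: sum_divide_distrib diff_divide_distrib)

lemma ip_zero: "ip V x x = 0 \<Longrightarrow> finite V \<Longrightarrow> v \<in> V \<Longrightarrow> x v = 0"
  unfolding ip_def using sum_nonneg_eq_0_iff[of V "\<lambda>v. x v * x v"] by auto

lemma rayleigh_max:
  assumes sg: "simple_graph V E" and ne: "V \<noteq> {}"
  shows "\<exists>M x0. (\<forall>x. bf V E x x \<le> M * ip V x x) \<and> ip V x0 x0 = 1 \<and> bf V E x0 x0 = M"
proof -
  have fV: "finite V" using sg by (simp add: simple_graph_def)
  define S where "S = (\<lambda>v. if v \<in> V then {-1..1::real} else {0})"
  define K where "K = Pi\<^sub>E UNIV S \<inter> {x. ip V x x = 1}"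
  have "compactin (product_topology (\<lambda>_. euclidean) UNIV) (Pi\<^sub>E UNIV S)"
    by (subst compactin_PiE) (auto simp: S_def compactin_euclidean_iff)
  then have c1: "compact (Pi\<^sub>E UNIV S)"
    by (simp add: euclidean_product_topology compactin_euclidean_iff)
  have c2: "closed {x::'a \<Rightarrow> real. ip V x x = 1}"
    by (rule closed_Collect_eq) (auto intro: ip_cont)
  have cK: "compact K" unfolding K_def using c1 c2 by (rule compact_Int_closed)
  obtain v0 where v0: "v0 \<in> V" using ne by blast
  define e where "e = (\<lambda>w. if w = v0 then 1 else (0::real))"
  have "ip V e e = (\<Sum>v\<in>V. if v = v0 then 1 else 0)"
    unfolding ip_def e_def by (rule sum.cong) auto
  then have ipe: "ip V e e = 1" using fV v0 by simp
  have "e \<in> Pi\<^sub>E UNIV S" using v0 by (simp add: PiE_UNIV_domain S_def e_def)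
  then have "e \<in> K" unfolding K_def using ipe by simp
  then have neK: "K \<noteq> {}" by blast
  obtain x0 where x0: "x0 \<in> K" "\<And>y. y \<in> K \<Longrightarrow> bf V E y y \<le> bf V E x0 x0"
    using continuous_attains_sup[OF cK neK bf_cont] by blast
  define M where "M = bf V E x0 x0"
  have "bf V E x x \<le> M * ip V x x" for x
  proof (cases "ip V x x = 0")
    case True
    then have "\<And>v. v \<in> V \<Longrightarrow> x v = 0" using ip_zero[OF True fV] by blast
    then have "bf V E x x = 0" unfolding bf_def by simp
    then show ?thesis using True by simp
  next
    case False
    then have pos: "ip V x x > 0" using ip_nonneg[of V x] by linarith
    define c where "c = sqrt (ip V x x)"
    have c: "c > 0" "c^2 = ip V x x" using pos by (auto simp: c_def)
    define y where "y = (\<lambda>w. if w \<in> V then x w / c else 0)"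
    have yV: "\<And>w. w \<in> V \<Longrightarrow> y w = x w / c" by (simp add: y_def)
    have "ip V y y = (\<Sum>v\<in>V. x v * x v / c^2)"
      unfolding ip_def by (rule sum.cong) (simp_all add: yV power2_eq_square)
    then have ipy: "ip V y y = ip V x x / c^2" by (simp add: ip_def sum_divide_distrib)
    then have ipy1: "ip V y y = 1" using c pos by simp
    have "bf V E y y = (\<Sum>v\<in>V. x v * laplacian V E x v / c^2)"
      unfolding bf_def by (rule sum.cong) (simp_all add: yV lap_scale[OF yV] power2_eq_square)
    then have bfy: "bf V E y y = bf V E x x / c^2" by (simp add: bf_def sum_divide_distrib)
    have yS: "y w \<in> S w" for w
    proof (cases "w \<in> V")
      case True
      have "y w * y w \<le> ip V y y" unfolding ip_def
        by (rule member_le_sum) (use True fV in simp_all)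
      then have yy: "y w * y w \<le> 1" using ipy1 by simp
      have "\<bar>y w\<bar> \<le> 1"
      proof (rule ccontr)
        assume "\<not> \<bar>y w\<bar> \<le> 1"
        then have "1 < \<bar>y w\<bar>" by simp
        then have "1 < \<bar>y w\<bar> * \<bar>y w\<bar>" by (metis less_1_mult)
        then show False using yy by (simp add: abs_mult_self_eq)
      qed
      then show ?thesis using True by (simp add: S_def abs_le_iff)
    next
      case False then show ?thesis by (simp add: S_def y_def)
    qed
    have "y \<in> Pi\<^sub>E UNIV S" using yS by (simp add: PiE_UNIV_domain)
    then have "y \<in> K" unfolding K_def using ipy1 by simp
    then have "bf V E y y \<le> M" unfolding M_def by (rule x0(2))
    then have "bf V E x x / c^2 \<le> M" using bfy by simp
    have c2: "c^2 > 0" using c(1) by (rule zero_less_power)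
    then have "bf V E x x \<le> M * c^2" using \<open>bf V E x x / c^2 \<le> M\<close> pos_divide_le_eq[OF c2] by blast
    then show ?thesis using c by simp
  qed
  moreover have "ip V x0 x0 = 1" using x0(1) K_def by simp
  ultimately show ?thesis unfolding M_def by blast
qed




lemma eq_eig:
  assumes sg: "simple_graph V E" and bound: "\<And>z. bf V E z z \<le> M * ip V z z"
    and eq: "bf V E x x = M * ip V x x" and v: "v \<in> V"
  shows "laplacian V E x v = M * x v"
proof (rule ccontr)
  assume ne: "laplacian V E x v \<noteq> M * x v"
  have fV: "finite V" using sg by (simp add: simple_graph_def)
  define y where "y = (\<lambda>w. if w = v then 1 else (0::real))"
  have "bf V E y x = (\<Sum>w\<in>V. if w = v then laplacian V E x v else 0)"
    unfolding bf_def y_def by (rule sum.cong) auto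
  then have hyx: "bf V E y x = laplacian V E x v" using fV v by simp
  have "ip V y x = (\<Sum>w\<in>V. if w = v then x v else 0)"
    unfolding ip_def y_def by (rule sum.cong) auto
  then have ipyx: "ip V y x = x v" using fV v by simp
  define q where "q = bf V E y y - M * ip V y y"
  have q: "q \<le> 0" using bound[of y] by (simp add: q_def)
  define \<beta> where "\<beta> = laplacian V E x v - M * x v"
  have b: "\<beta> \<noteq> 0" using ne by (simp add: \<beta>_def)
  define d where "d = 1 - q"
  have d: "d \<ge> 1" using q by (simp add: d_def)
  define t where "t = \<beta> / d"
  have "bf V E (\<lambda>w. x w + t * y w) (\<lambda>w. x w + t * y w) \<le> M * ip V (\<lambda>w. x w + t * y w) (\<lambda>w. x w + t * y w)"
    by (rule bound)
  then have "bf V E x x + 2 * t * bf V E y x + t^2 * bf V E y y \<le> M * (ip V x x + 2 * t * ip V y x + t^2 * ip V y y)"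
    unfolding bf_expand[OF sg] ip_expand .
  then have le: "2 * t * \<beta> + t^2 * q \<le> 0"
    using eq hyx ipyx unfolding q_def \<beta>_def by (simp add: algebra_simps)
  have dn: "d \<noteq> 0" using d by simp
  have val0: "2 * t * \<beta> + t^2 * q = \<beta>^2 * (2 * d + q) / d^2"
    unfolding t_def using dn by (simp add: field_simps power2_eq_square)
  have "2 * d + q = 2 - q" by (simp add: d_def)
  then have val: "2 * t * \<beta> + t^2 * q = \<beta>^2 * (2 - q) / d^2" using val0 by simp
  have "\<beta>^2 * (2 - q) / d^2 > 0" using b q dn by (intro divide_pos_pos mult_pos_pos) auto
  then show False using le val by simp
qed

lemma bessel:
  fixes g :: "'i \<Rightarrow> 'a \<Rightarrow> real"
  assumes fV: "finite V" and fI: "finite I"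
    and norm: "\<And>i. i \<in> I \<Longrightarrow> ip V (g i) (g i) = 1"
    and orth: "\<And>i j. i \<in> I \<Longrightarrow> j \<in> I \<Longrightarrow> i \<noteq> j \<Longrightarrow> ip V (g i) (g j) = 0"
  shows "card I \<le> card V"
proof -
  have pt: "(\<Sum>i\<in>I. (g i v)^2) \<le> 1" if v: "v \<in> V" for v
  proof -
    define c where "c i = g i v" for i
    define e where "e = (\<lambda>w. if w = v then 1 else (0::real))"
    define s where "s w = (\<Sum>i\<in>I. c i * g i w)" for w
    have ip_ij: "(\<Sum>w\<in>V. g i w * g j w) = (if i = j then 1 else 0)" if "i \<in> I" "j \<in> I" for i j
      using norm orth that unfolding ip_def by auto
    have "0 \<le> (\<Sum>w\<in>V. (e w - s w)^2)" by (simp add: sum_nonneg)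
    also have "\<dots> = (\<Sum>w\<in>V. e w * e w) - 2 * (\<Sum>w\<in>V. e w * s w) + (\<Sum>w\<in>V. s w * s w)"
      by (simp add: power2_eq_square algebra_simps sum.distrib sum_subtractf sum_distrib_left)
    also have "(\<Sum>w\<in>V. e w * e w) = 1"
    proof -
      have "(\<Sum>w\<in>V. e w * e w) = (\<Sum>w\<in>V. if w = v then 1 else 0)" unfolding e_def by (rule sum.cong) auto
      then show ?thesis using fV v by simp
    qed
    also have "(\<Sum>w\<in>V. e w * s w) = (\<Sum>i\<in>I. (c i)^2)"
    proof -
      have "(\<Sum>w\<in>V. e w * s w) = (\<Sum>w\<in>V. if w = v then s v else 0)" unfolding e_def by (rule sum.cong) auto
      then show ?thesis using fV v unfolding s_def c_def by (simp add: power2_eq_square)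
    qed
    also have "(\<Sum>w\<in>V. s w * s w) = (\<Sum>i\<in>I. (c i)^2)"
    proof -
      have "(\<Sum>w\<in>V. s w * s w) = (\<Sum>w\<in>V. \<Sum>i\<in>I. \<Sum>j\<in>I. c i * c j * (g i w * g j w))"
        unfolding s_def by (simp add: sum_product algebra_simps)
      also have "\<dots> = (\<Sum>i\<in>I. \<Sum>j\<in>I. c i * c j * (\<Sum>w\<in>V. g i w * g j w))"
        by (simp add: sum.swap[of _ V] sum_distrib_left)
      also have "\<dots> = (\<Sum>i\<in>I. \<Sum>j\<in>I. if j = i then c i * c i else 0)"
        by (rule sum.cong[OF refl], rule sum.cong[OF refl]) (simp add: ip_ij)
      also have "\<dots> = (\<Sum>i\<in>I. (c i)^2)" using fI by (simp add: power2_eq_square)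
      finally show ?thesis .
    qed
    finally show ?thesis unfolding c_def by simp
  qed
  have "real (card I) = (\<Sum>i\<in>I. ip V (g i) (g i))" using norm by simp
  also have "\<dots> = (\<Sum>v\<in>V. \<Sum>i\<in>I. (g i v)^2)"
    unfolding ip_def by (simp add: sum.swap[of _ I] power2_eq_square)
  also have "\<dots> \<le> (\<Sum>v\<in>V. 1)" by (rule sum_mono) (rule pt)
  also have "\<dots> = real (card V)" by simp
  finally show ?thesis by simp
qed




lemma eigvec_bf: "lap_eigenvector V E \<mu> f \<Longrightarrow> bf V E f f = \<mu> * ip V f f"
  unfolding lap_eigenvector_def bf_def ip_def by (simp add: sum_distrib_left algebra_simps)

lemma eigvec_bf2: "lap_eigenvector V E \<nu> h \<Longrightarrow> bf V E f h = \<nu> * ip V f h"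
  unfolding lap_eigenvector_def bf_def ip_def by (simp add: sum_distrib_left algebra_simps)

lemma ip_comm: "ip V f h = ip V h f" unfolding ip_def by (simp add: mult.commute)

lemma ip_pos: "finite V \<Longrightarrow> \<exists>v\<in>V. f v \<noteq> 0 \<Longrightarrow> ip V f f > 0"
  using ip_zero[of V f] ip_nonneg[of V f] by force

lemma eig_orth:
  assumes sg: "simple_graph V E" and f: "lap_eigenvector V E \<mu> f" and h: "lap_eigenvector V E \<nu> h"
    and ne: "\<mu> \<noteq> \<nu>"
  shows "ip V f h = 0"
proof -
  have "bf V E f h = \<nu> * ip V f h" by (rule eigvec_bf2[OF h])
  moreover have "bf V E h f = \<mu> * ip V f h" using eigvec_bf2[OF f, of h] ip_comm[of V h f] by simp
  ultimately have "\<nu> * ip V f h = \<mu> * ip V f h" using bf_sym[OF sg] by simp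
  then show ?thesis using ne by simp
qed

lemma ip_scale: "ip V (\<lambda>w. x w / a) (\<lambda>w. y w / b) = ip V x y / (a * b)"
proof -
  have "ip V (\<lambda>w. x w / a) (\<lambda>w. y w / b) = (\<Sum>v\<in>V. x v * y v / (a * b))"
    unfolding ip_def by (rule sum.cong) auto
  then show ?thesis by (simp add: ip_def sum_divide_distrib)
qed

lemma eig_finite:
  assumes sg: "simple_graph V E"
  shows "finite {\<mu>. lap_eigenvalue V E \<mu>}"
proof (rule ccontr)
  assume inf: "infinite {\<mu>. lap_eigenvalue V E \<mu>}"
  have fV: "finite V" using sg by (simp add: simple_graph_def)
  obtain I where I: "finite I" "card I = card V + 1" "I \<subseteq> {\<mu>. lap_eigenvalue V E \<mu>}"
    using infinite_arbitrarily_large[OF inf] by blast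
  define f where "f \<mu> = (SOME f. lap_eigenvector V E \<mu> f)" for \<mu>
  have fe: "lap_eigenvector V E \<mu> (f \<mu>)" if mu: "\<mu> \<in> I" for \<mu>
  proof -
    have "\<exists>f. lap_eigenvector V E \<mu> f" using I(3) mu by (auto simp: lap_eigenvalue_def)
    then show ?thesis unfolding f_def by (rule someI_ex)
  qed
  define n where "n \<mu> = sqrt (ip V (f \<mu>) (f \<mu>))" for \<mu>
  have npos: "n \<mu> > 0" if "\<mu> \<in> I" for \<mu>
    using ip_pos[OF fV] fe[OF that] unfolding n_def lap_eigenvector_def by auto
  define g where "g \<mu> = (\<lambda>w. f \<mu> w / n \<mu>)" for \<mu>
  have norm: "ip V (g \<mu>) (g \<mu>) = 1" if "\<mu> \<in> I" for \<mu>
  proof -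
    have "ip V (g \<mu>) (g \<mu>) = ip V (f \<mu>) (f \<mu>) / (n \<mu> * n \<mu>)" unfolding g_def by (rule ip_scale)
    moreover have "n \<mu> * n \<mu> = ip V (f \<mu>) (f \<mu>)" unfolding n_def using ip_nonneg[of V "f \<mu>"] by simp
    moreover have "n \<mu> * n \<mu> > 0" using npos[OF that] by simp
    ultimately show ?thesis by simp
  qed
  have orth: "ip V (g \<mu>) (g \<nu>) = 0" if "\<mu> \<in> I" "\<nu> \<in> I" "\<mu> \<noteq> \<nu>" for \<mu> \<nu>
  proof -
    have "ip V (g \<mu>) (g \<nu>) = ip V (f \<mu>) (f \<nu>) / (n \<mu> * n \<nu>)" unfolding g_def by (rule ip_scale)
    then show ?thesis using eig_orth[OF sg fe[OF that(1)] fe[OF that(2)] that(3)] by simp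
  qed
  have "card I \<le> card V" by (rule bessel[OF fV I(1) norm orth])
  then show False using I(2) by simp
qed

lemma spectral:
  assumes sg: "simple_graph V E" and ne: "V \<noteq> {}"
  shows "(\<forall>x. bf V E x x \<le> lap_max_eig V E * ip V x x) \<and>
    (\<forall>x. bf V E x x = lap_max_eig V E * ip V x x \<longrightarrow> (\<forall>v\<in>V. laplacian V E x v = lap_max_eig V E * x v))"
proof -
  have fV: "finite V" using sg by (simp add: simple_graph_def)
  obtain M x0 where M: "\<And>x. bf V E x x \<le> M * ip V x x" "ip V x0 x0 = 1" "bf V E x0 x0 = M"
    using rayleigh_max[OF sg ne] by blast
  have "\<exists>v\<in>V. x0 v \<noteq> 0"
  proof (rule ccontr)
    assume "\<not> (\<exists>v\<in>V. x0 v \<noteq> 0)"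
    then have "ip V x0 x0 = 0" unfolding ip_def by simp
    then show False using M(2) by simp
  qed
  moreover have "\<forall>v\<in>V. laplacian V E x0 v = M * x0 v"
    using eq_eig[OF sg M(1)] M(2,3) by simp
  ultimately have Meig: "lap_eigenvalue V E M"
    unfolding lap_eigenvalue_def lap_eigenvector_def by blast
  have Mmax: "\<mu> \<le> M" if eg: "lap_eigenvalue V E \<mu>" for \<mu>
  proof -
    obtain f where f: "lap_eigenvector V E \<mu> f" using eg unfolding lap_eigenvalue_def by blast
    have p: "ip V f f > 0" using ip_pos[OF fV] f unfolding lap_eigenvector_def by blast
    have "\<mu> * ip V f f \<le> M * ip V f f" using eigvec_bf[OF f] M(1)[of f] by simp
    then show ?thesis using p by simp
  qed
  have "lap_max_eig V E = M" unfolding lap_max_eig_def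
    by (rule Max_eqI[OF eig_finite[OF sg]]) (use Mmax Meig in auto)
  then show ?thesis using M(1) eq_eig[OF sg M(1)] by simp
qed




lemma Dsum_split:
  assumes fV: "finite V" and dj: "F1 \<inter> F2 = {}"
  shows "(\<Sum>p\<in>Sigma V (nbrs V (F1 \<union> F2)). g p) = (\<Sum>p\<in>Sigma V (nbrs V F1). g p) + (\<Sum>p\<in>Sigma V (nbrs V F2). g p)"
proof -
  have eq: "Sigma V (nbrs V (F1 \<union> F2)) = Sigma V (nbrs V F1) \<union> Sigma V (nbrs V F2)"
    by (auto simp: nbrs_def)
  have d: "Sigma V (nbrs V F1) \<inter> Sigma V (nbrs V F2) = {}" using dj by (auto simp: nbrs_def)
  have f1: "finite (Sigma V (nbrs V F1))" by (rule finite_subset[of _ "V \<times> V"]) (auto simp: nbrs_def fV)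
  have f2: "finite (Sigma V (nbrs V F2))" by (rule finite_subset[of _ "V \<times> V"]) (auto simp: nbrs_def fV)
  show ?thesis unfolding eq by (rule sum.union_disjoint[OF f1 f2 d])
qed

lemma Dsum_two:
  assumes V: "p \<in> V" "q \<in> V" "r \<in> V" "s \<in> V" and d: "p \<noteq> q" "r \<noteq> s" "{p, q} \<noteq> {r, s}"
  shows "(\<Sum>z\<in>Sigma V (nbrs V {{p, q}, {r, s}}). g z) = g (p, q) + g (q, p) + g (r, s) + g (s, r)"
proof -
  have eq: "Sigma V (nbrs V {{p, q}, {r, s}}) = {(p, q), (q, p), (r, s), (s, r)}"
    using V by (auto simp: nbrs_def doubleton_eq_iff)
  have "(p, q) \<noteq> (r, s)" "(p, q) \<noteq> (s, r)" "(q, p) \<noteq> (r, s)" "(q, p) \<noteq> (s, r)"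
    using d by (auto simp: doubleton_eq_iff)
  then show ?thesis unfolding eq using d by (simp add: add.assoc)
qed

lemma sq_sign: "((if a * b > 0 then -1 else 1) * a - b)^2 = (\<bar>a\<bar> + \<bar>b\<bar>)^2" for a b :: real
proof -
  have r: "(\<bar>a\<bar> + \<bar>b\<bar>)^2 = a^2 + b^2 + 2 * \<bar>a * b\<bar>"
    by (simp add: power2_eq_square algebra_simps abs_mult)
  show ?thesis
  proof (cases "a * b > 0")
    case True then show ?thesis unfolding r by (simp add: power2_eq_square algebra_simps)
  next
    case False then have "\<bar>a * b\<bar> = - (a * b)" by simp
    then show ?thesis unfolding r using False by (simp add: power2_eq_square algebra_simps)
  qed
qed

lemma sq_tri: "(a - b)^2 \<le> (\<bar>a\<bar> + \<bar>b\<bar>)^2" for a b :: real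
proof -
  have "\<bar>a - b\<bar> \<le> \<bar>a\<bar> + \<bar>b\<bar>" by (rule abs_triangle_ineq4)
  then show ?thesis by (metis abs_ge_zero abs_le_square_iff abs_of_nonneg add_nonneg_nonneg)
qed

context swap begin

definition "epsA f = (if f u1 * f v2 > 0 then -1 else (1::real))"
definition "epsD f = (if f u2 * f v1 > 0 then -1 else (1::real))"
definition "xv f w = (if reach E0 u1 w then epsA f * f w else if reach E0 u2 w then epsD f * f w else f w)"

lemma eps_sq: "epsA f * epsA f = 1" "epsD f * epsD f = 1"
  by (auto simp: epsA_def epsD_def)

lemma xv_vals: "xv f u1 = epsA f * f u1" "xv f v2 = f v2" "xv f u2 = epsD f * f u2" "xv f v1 = f v1"
  using n1 n2 n3 n4 n5 by (auto simp: xv_def)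

lemma xv_sq: "xv f w * xv f w = f w * f w"
  unfolding xv_def using eps_sq[of f] by (auto simp: algebra_simps)

lemma xv_E0: assumes "{a, b} \<in> E0" shows "(xv f a - xv f b)^2 = (f a - f b)^2"
proof -
  have r: "reach E0 a b" using assms by (rule reach_edge)
  have c1: "reach E0 u1 a \<longleftrightarrow> reach E0 u1 b" using reach_trans[OF _ r, of u1] reach_trans[OF _ reach_sym[OF r], of u1] by blast
  have c2: "reach E0 u2 a \<longleftrightarrow> reach E0 u2 b" using reach_trans[OF _ r, of u2] reach_trans[OF _ reach_sym[OF r], of u2] by blast
  have "(\<sigma> * f a - \<sigma> * f b)^2 = (f a - f b)^2" if "\<sigma> * \<sigma> = 1" for \<sigma>
  proof -
    have "(\<sigma> * f a - \<sigma> * f b)^2 = (\<sigma> * \<sigma>) * (f a - f b)^2" by (simp add: power2_eq_square algebra_simps)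
    then show ?thesis using that by simp
  qed
  then show ?thesis unfolding xv_def using c1 c2 eps_sq[of f] by auto
qed

end



context swap begin

lemma ne_new: "{u1, v2} \<noteq> {u2, v1}" using u_neq neq inV by (auto simp: doubleton_eq_iff)

lemma E_split: "E = E0 \<union> {{u1, v1}, {u2, v2}}" using e1 e2 by blast

lemma qf_cmp:
  "qf V E2 (xv f) (xv f) - qf V E f f =
   2 * ((epsA f * f u1 - f v2)^2 + (epsD f * f u2 - f v1)^2 - (f u1 - f v1)^2 - (f u2 - f v2)^2)"
proof -
  let ?g = "\<lambda>x p. (x (fst p) - x (snd p)) * (x (fst p) - x (snd p))"
  have d2: "E0 \<inter> {{u1, v2}, {u2, v1}} = {}" using new_notin by blast
  have d1: "E0 \<inter> {{u1, v1}, {u2, v2}} = {}" by blast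
  have q2: "qf V E2 (xv f) (xv f) = (\<Sum>p\<in>Sigma V (nbrs V E0). ?g (xv f) p) + (\<Sum>p\<in>Sigma V (nbrs V {{u1, v2}, {u2, v1}}). ?g (xv f) p)"
    unfolding qf_def by (rule Dsum_split[OF fV d2])
  have q1: "qf V E f f = (\<Sum>p\<in>Sigma V (nbrs V E0). ?g f p) + (\<Sum>p\<in>Sigma V (nbrs V {{u1, v1}, {u2, v2}}). ?g f p)"
    unfolding qf_def by (subst E_split, rule Dsum_split[OF fV d1])
  have s0: "(\<Sum>p\<in>Sigma V (nbrs V E0). ?g (xv f) p) = (\<Sum>p\<in>Sigma V (nbrs V E0). ?g f p)"
  proof (rule sum.cong[OF refl])
    fix p assume "p \<in> Sigma V (nbrs V E0)"
    then have "{fst p, snd p} \<in> E0" by (auto simp: nbrs_def)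
    then show "?g (xv f) p = ?g f p" using xv_E0[of "fst p" "snd p" f] by (simp add: power2_eq_square)
  qed
  have s2: "(\<Sum>p\<in>Sigma V (nbrs V {{u1, v2}, {u2, v1}}). ?g (xv f) p) =
      2 * ((epsA f * f u1 - f v2)^2 + (epsD f * f u2 - f v1)^2)"
    using Dsum_two[of u1 V v2 u2 v1 "?g (xv f)"] inV neq ne_new xv_vals
    by (simp add: power2_eq_square algebra_simps)
  have s1: "(\<Sum>p\<in>Sigma V (nbrs V {{u1, v1}, {u2, v2}}). ?g f p) =
      2 * ((f u1 - f v1)^2 + (f u2 - f v2)^2)"
    using Dsum_two[of u1 V v1 u2 v2 "?g f"] inV edges_ne
    by (simp add: power2_eq_square algebra_simps)
  show ?thesis using q1 q2 s0 s1 s2 by simp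
qed

lemma aux4: "X \<le> X1 \<Longrightarrow> Y \<le> Y1 \<Longrightarrow> A + B - X1 - Y1 = 2 * T \<Longrightarrow> T \<ge> 0 \<Longrightarrow> A + B - X - Y \<ge> (0::real)"
  by linarith

lemma aux2: "0 \<le> Z \<Longrightarrow> A - B = 2 * Z \<Longrightarrow> B \<le> (A::real)"
  by linarith

lemma qf_ge:
  assumes h1: "\<bar>f u2\<bar> \<le> \<bar>f u1\<bar>" and h2: "\<bar>f v1\<bar> \<le> \<bar>f v2\<bar>"
  shows "qf V E2 (xv f) (xv f) \<ge> qf V E f f"
proof -
  have a: "(epsA f * f u1 - f v2)^2 = (\<bar>f u1\<bar> + \<bar>f v2\<bar>)^2" unfolding epsA_def by (rule sq_sign)
  have b: "(epsD f * f u2 - f v1)^2 = (\<bar>f u2\<bar> + \<bar>f v1\<bar>)^2" unfolding epsD_def by (rule sq_sign)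
  have c: "(f u1 - f v1)^2 \<le> (\<bar>f u1\<bar> + \<bar>f v1\<bar>)^2" "(f u2 - f v2)^2 \<le> (\<bar>f u2\<bar> + \<bar>f v2\<bar>)^2"
    by (rule sq_tri)+
  have id: "(\<bar>f u1\<bar> + \<bar>f v2\<bar>)^2 + (\<bar>f u2\<bar> + \<bar>f v1\<bar>)^2 - (\<bar>f u1\<bar> + \<bar>f v1\<bar>)^2 - (\<bar>f u2\<bar> + \<bar>f v2\<bar>)^2
     = 2 * ((\<bar>f u1\<bar> - \<bar>f u2\<bar>) * (\<bar>f v2\<bar> - \<bar>f v1\<bar>))"
    by (simp add: power2_eq_square algebra_simps)
  have "(\<bar>f u1\<bar> - \<bar>f u2\<bar>) * (\<bar>f v2\<bar> - \<bar>f v1\<bar>) \<ge> 0" using h1 h2 by simp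
  then have "(\<bar>f u1\<bar> + \<bar>f v2\<bar>)^2 + (\<bar>f u2\<bar> + \<bar>f v1\<bar>)^2 - (f u1 - f v1)^2 - (f u2 - f v2)^2 \<ge> 0"
    using aux4[OF c(1) c(2) id] by blast
  then have "(epsA f * f u1 - f v2)^2 + (epsD f * f u2 - f v1)^2 - (f u1 - f v1)^2 - (f u2 - f v2)^2 \<ge> 0"
    unfolding a b .
  then show ?thesis using qf_cmp[of f] by (rule aux2)
qed

lemma nb_u1: "nbrs V E2 u1 = insert v2 (nbrs V E u1 - {v1})"
  using inV neq u_neq distinct_v by (auto simp: nbrs_def doubleton_eq_iff)

lemma nb_v1: "nbrs V E2 v1 = insert u2 (nbrs V E v1 - {u1})"
  using inV neq u_neq distinct_v by (auto simp: nbrs_def doubleton_eq_iff insert_commute)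

lemma fin_nb: "finite (nbrs V F w)" using fV nbrs_sub finite_subset by metis

lemma eq_u1:
  assumes l1: "laplacian V E f u1 = mu * f u1" and l2: "laplacian V E2 (xv f) u1 = mu * xv f u1"
  shows "\<bar>f v2\<bar> = \<bar>f v1\<bar>"
proof -
  let ?N = "nbrs V E u1 - {v1}"
  have v1N: "v1 \<in> nbrs V E u1" using e1 inV by (simp add: nbrs_def)
  have v2N: "v2 \<notin> ?N" using new_notin by (simp add: nbrs_def)
  have S1: "(\<Sum>w\<in>nbrs V E u1. f w) = f v1 + (\<Sum>w\<in>?N. f w)"
    using sum.remove[OF fin_nb v1N] by simp
  have xN: "xv f w = epsA f * f w" if w: "w \<in> ?N" for w
  proof -
    have "{u1, w} \<in> E0" using w inV neq u_neq by (auto simp: nbrs_def doubleton_eq_iff)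
    then have "reach E0 u1 w" by (rule reach_edge)
    then show ?thesis by (simp add: xv_def)
  qed
  have "(\<Sum>w\<in>nbrs V E2 u1. xv f w) = xv f v2 + (\<Sum>w\<in>?N. xv f w)"
    unfolding nb_u1 using v2N fin_nb[of E u1] by simp
  also have "(\<Sum>w\<in>?N. xv f w) = epsA f * (\<Sum>w\<in>?N. f w)"
    by (simp add: sum_distrib_left xN)
  finally have S2: "(\<Sum>w\<in>nbrs V E2 u1. xv f w) = f v2 + epsA f * (\<Sum>w\<in>?N. f w)" using xv_vals by simp
  define s where "s = (\<Sum>w\<in>?N. f w)"
  define d where "d = real (Defs.degree E u1)"
  define e where "e = epsA f"
  have A: "d * f u1 - (f v1 + s) = mu * f u1" using l1 S1 unfolding laplacian_nbrs s_def d_def by simp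
  have B: "d * (e * f u1) - (f v2 + e * s) = mu * (e * f u1)"
    using l2 S2 xv_vals unfolding laplacian_nbrs s_def d_def e_def deg by simp
  have "e * (d * f u1 - (f v1 + s)) = e * (mu * f u1)" using A by simp
  then have "f v2 = e * f v1" using B by (simp add: algebra_simps)
  moreover have "\<bar>e\<bar> = 1" by (simp add: e_def epsA_def)
  ultimately show ?thesis by (simp add: abs_mult)
qed

lemma eq_v1:
  assumes l1: "laplacian V E f v1 = mu * f v1" and l2: "laplacian V E2 (xv f) v1 = mu * xv f v1"
  shows "\<bar>f u2\<bar> = \<bar>f u1\<bar>"
proof -
  let ?N = "nbrs V E v1 - {u1}"
  have u1N: "u1 \<in> nbrs V E v1" using e1 inV by (simp add: nbrs_def insert_commute)
  have u2N: "u2 \<notin> ?N" using new_notin by (simp add: nbrs_def insert_commute)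
  have S1: "(\<Sum>w\<in>nbrs V E v1. f w) = f u1 + (\<Sum>w\<in>?N. f w)"
    using sum.remove[OF fin_nb u1N] by simp
  have xN: "xv f w = f w" if w: "w \<in> ?N" for w
  proof -
    have "{v1, w} \<in> E0" using w inV neq u_neq distinct_v by (auto simp: nbrs_def doubleton_eq_iff)
    then have r: "reach E0 v1 w" by (rule reach_edge)
    have "\<not> reach E0 u1 w"
    proof
      assume "reach E0 u1 w"
      then have "reach E0 u1 v1" using reach_sym[OF r] by (rule reach_trans)
      then show False using n1 by simp
    qed
    moreover have "\<not> reach E0 u2 w"
    proof
      assume "reach E0 u2 w"
      then have "reach E0 u2 v1" using reach_sym[OF r] by (rule reach_trans)
      then show False using n4 by simp
    qed
    ultimately show ?thesis by (simp add: xv_def)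
  qed
  have "(\<Sum>w\<in>nbrs V E2 v1. xv f w) = xv f u2 + (\<Sum>w\<in>?N. xv f w)"
    unfolding nb_v1 using u2N fin_nb[of E v1] by simp
  also have "(\<Sum>w\<in>?N. xv f w) = (\<Sum>w\<in>?N. f w)"
    by (rule sum.cong) (simp_all add: xN)
  finally have S2: "(\<Sum>w\<in>nbrs V E2 v1. xv f w) = epsD f * f u2 + (\<Sum>w\<in>?N. f w)" using xv_vals by simp
  define s where "s = (\<Sum>w\<in>?N. f w)"
  define d where "d = real (Defs.degree E v1)"
  define e where "e = epsD f"
  have A: "d * f v1 - (f u1 + s) = mu * f v1" using l1 S1 unfolding laplacian_nbrs s_def d_def by simp
  have B: "d * f v1 - (e * f u2 + s) = mu * f v1"
    using l2 S2 xv_vals unfolding laplacian_nbrs s_def d_def e_def deg by simp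
  have "f u1 = e * f u2" using A B by simp
  moreover have "\<bar>e\<bar> = 1" by (simp add: e_def epsD_def)
  ultimately show ?thesis by (simp add: abs_mult)
qed

lemma main_eig:
  assumes f: "lap_eigenvector V E (lap_max_eig V E) f"
    and h1: "\<bar>f u2\<bar> \<le> \<bar>f u1\<bar>" and h2: "\<bar>f v1\<bar> \<le> \<bar>f v2\<bar>"
  shows "lap_max_eig V E2 \<ge> lap_max_eig V E \<and>
    ((\<bar>f u1\<bar> > \<bar>f u2\<bar> \<or> \<bar>f v2\<bar> > \<bar>f v1\<bar>) \<longrightarrow> lap_max_eig V E2 > lap_max_eig V E)"
proof -
  let ?l = "lap_max_eig V E" and ?l2 = "lap_max_eig V E2" and ?x = "xv f"
  have ne: "V \<noteq> {}" using inV by blast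
  note sp2 = spectral[OF sg2 ne]
  have ipx: "ip V ?x ?x = ip V f f" unfolding ip_def by (rule sum.cong) (simp_all add: xv_sq)
  have ipf: "ip V f f > 0" using ip_pos[OF fV] f unfolding lap_eigenvector_def by blast
  have bff: "bf V E f f = ?l * ip V f f" by (rule eigvec_bf[OF f])
  have ge: "bf V E2 ?x ?x \<ge> bf V E f f" using qf_ge[OF h1 h2] qf_bf[OF sg2] qf_bf[OF sg] by simp
  have bd: "bf V E2 ?x ?x \<le> ?l2 * ip V f f" using sp2 ipx by metis
  have "?l * ip V f f \<le> ?l2 * ip V f f" using ge bd bff by simp
  then have le: "?l \<le> ?l2" using ipf by simp
  moreover have "?l2 > ?l" if st: "\<bar>f u1\<bar> > \<bar>f u2\<bar> \<or> \<bar>f v2\<bar> > \<bar>f v1\<bar>"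
  proof (rule ccontr)
    assume "\<not> ?l2 > ?l"
    then have eql: "?l2 = ?l" using le by simp
    have "bf V E2 ?x ?x = ?l2 * ip V ?x ?x" using ge bd bff eql ipx by simp
    then have lx: "\<forall>v\<in>V. laplacian V E2 ?x v = ?l2 * ?x v" using sp2 by blast
    have lf: "\<forall>v\<in>V. laplacian V E f v = ?l * f v" using f unfolding lap_eigenvector_def by blast
    have "\<bar>f v2\<bar> = \<bar>f v1\<bar>" using eq_u1[of f ?l] lx lf inV eql by simp
    moreover have "\<bar>f u2\<bar> = \<bar>f u1\<bar>" using eq_v1[of f ?l] lx lf inV eql by simp
    ultimately show False using st by simp
  qed
  ultimately show ?thesis by blast
qed

end

theorem lemma5:
  fixes V :: "'a set" and E :: "'a set set" and u1 v1 u2 v2 :: 'a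
  assumes tree: "is_tree V E"
    and e1: "{u1, v1} \<in> E" and e2: "{u2, v2} \<in> E"
    and distinct_v: "v1 \<noteq> v2"
    and path_avoid: "u1 \<notin> set (tree_path V E v1 v2)" "u2 \<notin> set (tree_path V E v1 v2)"
  defines "E' \<equiv> (E - {{u1, v1}, {u2, v2}}) \<union> {{u1, v2}, {u2, v1}}"
  shows "is_tree V E' \<and> degree_seq V E' = degree_seq V E \<and>
    (\<forall>f. lap_eigenvector V E (lap_max_eig V E) f \<longrightarrow>
       \<bar>f u1\<bar> \<ge> \<bar>f u2\<bar> \<longrightarrow> \<bar>f v2\<bar> \<ge> \<bar>f v1\<bar> \<longrightarrow>
         lap_max_eig V E' \<ge> lap_max_eig V E \<and>
         ((\<bar>f u1\<bar> > \<bar>f u2\<bar> \<or> \<bar>f v2\<bar> > \<bar>f v1\<bar>) \<longrightarrow> lap_max_eig V E' > lap_max_eig V E))"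
  proof -
  interpret swap V E u1 v1 u2 v2
    using tree e1 e2 distinct_v path_avoid by unfold_locales
  show ?thesis unfolding E'_def using tree2 degseq main_eig by auto
qed

end
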